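(* A $3$-ranked liner $X$ is Boolean if and only if every parallelogram in $X$ is Boolean.
   Context: A liner is a set $X$ of points with a family of subsets called lines such that any two distinct points lie in a unique line and every line contains at least two points. For distinct $x,y$, $\overline{xy}$ is the line through them and $\overline{xx}:=\{x\}$. A set is flat if it contains $\overline{xy}$ for all its distinct points; $\overline A$ is the smallest flat containing $A$; the rank $\|A\|$ is the smallest cardinality of $B\subseteq X$ with $A\subseteq\overline B$. $X$ is $3$-ranked if any flats $A\subseteq B$ with $\|A\|=\|B\|\le3$ are equal. A flat $A$ is subparallel to a flat $B$ if $A\subseteq\overline{\{a\}\cup B}$ for every $a\in A$; $A\parallel B$ means each is subparallel to the other. A parallelogram is a quadruple $abcd\in X^4$ with $\overline{ab}\parallel\overline{cd}\ne\overline{ab}$ and $\overline{bc}\parallel\overline{ad}\ne\overline{bc}$; it is Boolean if $\overline{ac}\parallel\overline{bd}$. $X$ is Boolean if for every quadruple $abcd\in X^4$, $\overline{ab}\cap\overline{cd}=\varnothing=\overline{bc}\cap\overline{ad}$ implies $\overline{ac}\cap\overline{bd}=\varnothing$. *)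

theory Defs
  imports "HOL-Library.Extended_Nat"
begin

definition liner :: "'a set \<Rightarrow> 'a set set \<Rightarrow> bool" where
  "liner X L \<longleftrightarrow>
     (\<forall>l\<in>L. l \<subseteq> X \<and> (\<exists>x y. x \<in> l \<and> y \<in> l \<and> x \<noteq> y)) \<and>
     (\<forall>x\<in>X. \<forall>y\<in>X. x \<noteq> y \<longrightarrow> (\<exists>!l. l \<in> L \<and> x \<in> l \<and> y \<in> l))"

definition line :: "'a set set \<Rightarrow> 'a \<Rightarrow> 'a \<Rightarrow> 'a set" where
  "line L x y = (if x = y then {x} else (THE l. l \<in> L \<and> x \<in> l \<and> y \<in> l))"

definition flat :: "'a set \<Rightarrow> 'a set set \<Rightarrow> 'a set \<Rightarrow> bool" where
  "flat X L A \<longleftrightarrow> A \<subseteq> X \<and> (\<forall>x\<in>A. \<forall>y\<in>A. x \<noteq> y \<longrightarrow> line L x y \<subseteq> A)"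

definition flat_hull :: "'a set \<Rightarrow> 'a set set \<Rightarrow> 'a set \<Rightarrow> 'a set" where
  "flat_hull X L A = \<Inter>{F. flat X L F \<and> A \<subseteq> F}"

text \<open>Rank: smallest cardinality of B \<subseteq> X with A \<subseteq> hull B; infinite cardinalities are
  collapsed to \<infinity> (only finite ranks \<le> 3 matter below).\<close>
definition rank :: "'a set \<Rightarrow> 'a set set \<Rightarrow> 'a set \<Rightarrow> enat" where
  "rank X L A = (if \<exists>B. B \<subseteq> X \<and> finite B \<and> A \<subseteq> flat_hull X L B
      then enat (LEAST n. \<exists>B. B \<subseteq> X \<and> finite B \<and> card B = n \<and> A \<subseteq> flat_hull X L B)
      else \<infinity>)"

definition ranked3 :: "'a set \<Rightarrow> 'a set set \<Rightarrow> bool" where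
  "ranked3 X L \<longleftrightarrow> (\<forall>A B. flat X L A \<and> flat X L B \<and> A \<subseteq> B \<and>
      rank X L A = rank X L B \<and> rank X L B \<le> 3 \<longrightarrow> A = B)"

definition subparallel :: "'a set \<Rightarrow> 'a set set \<Rightarrow> 'a set \<Rightarrow> 'a set \<Rightarrow> bool" where
  "subparallel X L A B \<longleftrightarrow> (\<forall>a\<in>A. A \<subseteq> flat_hull X L (insert a B))"

definition parallel :: "'a set \<Rightarrow> 'a set set \<Rightarrow> 'a set \<Rightarrow> 'a set \<Rightarrow> bool" where
  "parallel X L A B \<longleftrightarrow> subparallel X L A B \<and> subparallel X L B A"

definition parallelogram :: "'a set \<Rightarrow> 'a set set \<Rightarrow> 'a \<Rightarrow> 'a \<Rightarrow> 'a \<Rightarrow> 'a \<Rightarrow> bool" where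
  "parallelogram X L a b c d \<longleftrightarrow> a \<in> X \<and> b \<in> X \<and> c \<in> X \<and> d \<in> X \<and>
     parallel X L (line L a b) (line L c d) \<and> line L c d \<noteq> line L a b \<and>
     parallel X L (line L b c) (line L a d) \<and> line L a d \<noteq> line L b c"

definition boolean_parallelogram :: "'a set \<Rightarrow> 'a set set \<Rightarrow> 'a \<Rightarrow> 'a \<Rightarrow> 'a \<Rightarrow> 'a \<Rightarrow> bool" where
  "boolean_parallelogram X L a b c d \<longleftrightarrow>
     parallelogram X L a b c d \<and> parallel X L (line L a c) (line L b d)"

definition boolean_liner :: "'a set \<Rightarrow> 'a set set \<Rightarrow> bool" where
  "boolean_liner X L \<longleftrightarrow> (\<forall>a\<in>X. \<forall>b\<in>X. \<forall>c\<in>X. \<forall>d\<in>X.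
     line L a b \<inter> line L c d = {} \<and> line L b c \<inter> line L a d = {} \<longrightarrow>
     line L a c \<inter> line L b d = {})"

end

theory Submission
  imports Defs
begin

lemma line_props:
  assumes "liner X L" "x \<in> X" "y \<in> X" "x \<noteq> y"
  shows "line L x y \<in> L \<and> x \<in> line L x y \<and> y \<in> line L x y"
proof -
  have "\<exists>!l. l \<in> L \<and> x \<in> l \<and> y \<in> l" using assms unfolding liner_def by simp
  then have "(THE l. l \<in> L \<and> x \<in> l \<and> y \<in> l) \<in> L \<and> x \<in> (THE l. l \<in> L \<and> x \<in> l \<and> y \<in> l) \<and> y \<in> (THE l. l \<in> L \<and> x \<in> l \<and> y \<in> l)"
    by (rule theI')
  then show ?thesis using assms(4) unfolding line_def by simp
qed

lemma line_unique:
  assumes "liner X L" "l \<in> L" "x \<in> l" "y \<in> l" "x \<noteq> y"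
  shows "line L x y = l"
proof -
  have "l \<subseteq> X" using assms(1,2) by (simp add: liner_def)
  then have X: "x \<in> X" "y \<in> X" using assms by blast+
  have "\<exists>!l. l \<in> L \<and> x \<in> l \<and> y \<in> l" using assms X unfolding liner_def by simp
  then show ?thesis using line_props[OF assms(1) X assms(5)] assms(2-4) by blast
qed

lemma line_ends:
  assumes "liner X L" "x \<in> X" "y \<in> X"
  shows "x \<in> line L x y" "y \<in> line L x y"
  using line_props[OF assms] by (cases "x = y"; simp add: line_def)+

lemma line_sub:
  assumes "liner X L" "x \<in> X" "y \<in> X"
  shows "line L x y \<subseteq> X"
proof (cases "x = y")
  case True then show ?thesis using assms by (simp add: line_def)
next
  case False
  have "line L x y \<in> L" using line_props[OF assms False] by blast
  then show ?thesis using assms(1) by (simp add: liner_def)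
qed

lemma line_eq:
  assumes "liner X L" "x \<in> X" "y \<in> X" "x \<noteq> y" "z \<in> line L x y" "w \<in> line L x y" "z \<noteq> w"
  shows "line L z w = line L x y"
proof -
  have "line L x y \<in> L" using line_props[OF assms(1-4)] by blast
  then show ?thesis using line_unique[OF assms(1) _ assms(5,6,7)] by blast
qed

lemma line_sym:
  assumes "liner X L" "x \<in> X" "y \<in> X"
  shows "line L x y = line L y x"
proof (cases "x = y")
  case True then show ?thesis by simp
next
  case False
  show ?thesis using line_eq[OF assms False line_ends(2,1)[OF assms]] False by simp
qed

lemma flat_line:
  assumes "liner X L" "x \<in> X" "y \<in> X"
  shows "flat X L (line L x y)"
proof (cases "x = y")
  case True then show ?thesis using assms by (simp add: line_def flat_def)
next
  case False
  show ?thesis unfolding flat_def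
  proof (intro conjI ballI impI)
    show "line L x y \<subseteq> X" by (rule line_sub[OF assms])
    fix z w assume "z \<in> line L x y" "w \<in> line L x y" "z \<noteq> w"
    then show "line L z w \<subseteq> line L x y" using line_eq[OF assms False] by simp
  qed
qed

lemma flat_X: "liner X L \<Longrightarrow> flat X L X"
  unfolding flat_def by (simp add: line_sub)

lemma hull_sub: "A \<subseteq> flat_hull X L A"
  unfolding flat_hull_def by blast

lemma hull_least: "flat X L F \<Longrightarrow> A \<subseteq> F \<Longrightarrow> flat_hull X L A \<subseteq> F"
  unfolding flat_hull_def by blast

lemma hull_mono: "A \<subseteq> B \<Longrightarrow> flat_hull X L A \<subseteq> flat_hull X L B"
  unfolding flat_hull_def by blast

lemma hull_flat:
  assumes "liner X L" "A \<subseteq> X"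
  shows "flat X L (flat_hull X L A)"
proof -
  have "flat_hull X L A \<subseteq> X" using hull_least[OF flat_X[OF assms(1)] assms(2)] .
  moreover have "line L x y \<subseteq> flat_hull X L A" if "x \<in> flat_hull X L A" "y \<in> flat_hull X L A" "x \<noteq> y" for x y
  proof -
    have "line L x y \<subseteq> F" if "flat X L F" "A \<subseteq> F" for F
    proof -
      have "x \<in> F" "y \<in> F" using that \<open>x \<in> flat_hull X L A\<close> \<open>y \<in> flat_hull X L A\<close>
        unfolding flat_hull_def by auto
      then show ?thesis using that(1) \<open>x \<noteq> y\<close> unfolding flat_def by auto
    qed
    then show ?thesis unfolding flat_hull_def by (intro Inter_greatest) auto
  qed
  ultimately show ?thesis unfolding flat_def by simp
qed

lemma hull_of_flat: "flat X L F \<Longrightarrow> flat_hull X L F = F"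
  using hull_least[of X L F F] hull_sub[of F X L] by auto

lemma flat_line_sub:
  assumes "liner X L" "flat X L F" "x \<in> F" "y \<in> F"
  shows "line L x y \<subseteq> F"
  using assms unfolding flat_def line_def by (cases "x = y") auto

lemma card_le2:
  assumes "B \<subseteq> X" "finite B" "card B \<le> 2" "a \<in> X"
  shows "\<exists>p\<in>X. \<exists>q\<in>X. B \<subseteq> {p, q}"
proof -
  have "card B = 0 \<or> card B = 1 \<or> card B = 2" using assms(3) by auto
  then show ?thesis
  proof (elim disjE)
    assume "card B = 0" then have "B = {}" using assms(2) by simp
    then show ?thesis using assms(4) by blast
  next
    assume "card B = 1" then obtain p where "B = {p}" by (auto simp: card_1_singleton_iff)
    then show ?thesis using assms(1) by blast
  next
    assume "card B = 2" then obtain p q where "B = {p, q}" by (auto simp: card_2_iff)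
    then show ?thesis using assms(1) by blast
  qed
qed

lemma hull_pair_line:
  assumes "liner X L" "p \<in> X" "q \<in> X"
  shows "flat_hull X L {p, q} \<subseteq> line L p q"
proof -
  have "{p, q} \<subseteq> line L p q" using line_ends[OF assms] by simp
  then show ?thesis by (rule hull_least[OF flat_line[OF assms]])
qed

lemma rank_three:
  assumes L: "liner X L" and X: "a \<in> X" "b \<in> X" "c \<in> X" and ab: "a \<noteq> b" and c: "c \<notin> line L a b"
  shows "rank X L (flat_hull X L {a, b, c}) = 3"
proof -
  let ?P = "\<lambda>n. \<exists>B. B \<subseteq> X \<and> finite B \<and> card B = n \<and> flat_hull X L {a, b, c} \<subseteq> flat_hull X L B"
  have ca: "c \<noteq> a" "c \<noteq> b" using c line_ends[OF L X(1,2)] by auto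
  have P3: "?P 3" using X ab ca by (intro exI[of _ "{a,b,c}"]) auto
  have "(LEAST n. ?P n) = 3"
  proof (rule Least_equality)
    show "?P 3" by (rule P3)
    fix n assume "?P n"
    then obtain B where B: "B \<subseteq> X" "finite B" "card B = n" "flat_hull X L {a, b, c} \<subseteq> flat_hull X L B" by blast
    show "3 \<le> n"
    proof (rule ccontr)
      assume "\<not> 3 \<le> n"
      then have "card B \<le> 2" using B(3) by simp
      then obtain p q where pq: "p \<in> X" "q \<in> X" "B \<subseteq> {p, q}" using card_le2[OF B(1,2) _ X(1)] by blast
      have "flat_hull X L B \<subseteq> line L p q"
        using hull_mono[OF pq(3), of X L] hull_pair_line[OF L pq(1,2)] by blast
      then have abc: "a \<in> line L p q" "b \<in> line L p q" "c \<in> line L p q"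
        using B(4) hull_sub[of "{a,b,c}" X L] by blast+
      show False
      proof (cases "p = q")
        case True then show ?thesis using abc ab by (simp add: line_def)
      next
        case False
        have "line L p q \<in> L" using line_props[OF L pq(1,2) False] by blast
        then have "line L a b = line L p q" using line_unique[OF L _ abc(1,2) ab] by blast
        then show False using c abc(3) by simp
      qed
    qed
  qed
  moreover have "\<exists>B. B \<subseteq> X \<and> finite B \<and> flat_hull X L {a, b, c} \<subseteq> flat_hull X L B" using P3 by blast
  ultimately show ?thesis unfolding rank_def by (simp add: numeral_eq_enat)
qed

lemma plane_eq:
  assumes L: "liner X L" and R: "ranked3 X L"
    and X: "a \<in> X" "b \<in> X" "c \<in> X" and ab: "a \<noteq> b" and c: "c \<notin> line L a b"
    and Y: "x \<in> X" "y \<in> X" "z \<in> X" and xy: "x \<noteq> y" and z: "z \<notin> line L x y"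
    and inP: "x \<in> flat_hull X L {a, b, c}" "y \<in> flat_hull X L {a, b, c}" "z \<in> flat_hull X L {a, b, c}"
  shows "flat_hull X L {x, y, z} = flat_hull X L {a, b, c}"
proof -
  have fA: "flat X L (flat_hull X L {x, y, z})" using hull_flat[OF L] Y by simp
  have fB: "flat X L (flat_hull X L {a, b, c})" using hull_flat[OF L] X by simp
  have sub: "flat_hull X L {x, y, z} \<subseteq> flat_hull X L {a, b, c}" using hull_least[OF fB] inP by simp
  have r1: "rank X L (flat_hull X L {x, y, z}) = 3" by (rule rank_three[OF L Y xy z])
  have r2: "rank X L (flat_hull X L {a, b, c}) = 3" by (rule rank_three[OF L X ab c])
  show ?thesis using R fA fB sub r1 r2 unfolding ranked3_def by simp
qed

lemma subpar:
  assumes L: "liner X L" and R: "ranked3 X L"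
    and X: "a \<in> X" "b \<in> X" "c \<in> X" and ab: "a \<noteq> b" and c: "c \<notin> line L a b"
    and U: "u \<in> X" "v \<in> X" "x \<in> X" "y \<in> X" and xy: "x \<noteq> y"
    and disj: "line L u v \<inter> line L x y = {}"
    and inP: "u \<in> flat_hull X L {a, b, c}" "v \<in> flat_hull X L {a, b, c}"
       "x \<in> flat_hull X L {a, b, c}" "y \<in> flat_hull X L {a, b, c}"
  shows "subparallel X L (line L u v) (line L x y)"
  unfolding subparallel_def
proof
  fix z assume z: "z \<in> line L u v"
  have fB: "flat X L (flat_hull X L {a, b, c})" using hull_flat[OF L] X by simp
  have uvP: "line L u v \<subseteq> flat_hull X L {a, b, c}" by (rule flat_line_sub[OF L fB inP(1,2)])
  have zX: "z \<in> X" using line_sub[OF L U(1,2)] z by blast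
  have zn: "z \<notin> line L x y" using z disj by blast
  have eq: "flat_hull X L {x, y, z} = flat_hull X L {a, b, c}"
    by (rule plane_eq[OF L R X ab c U(3,4) zX xy zn inP(3,4)]) (use uvP z in blast)
  have "flat_hull X L {x, y, z} \<subseteq> flat_hull X L (insert z (line L x y))"
    using line_ends[OF L U(3,4)] by (intro hull_mono) blast
  then show "line L u v \<subseteq> flat_hull X L (insert z (line L x y))" using eq uvP by blast
qed

lemma par_meet:
  assumes L: "liner X L" and sp: "subparallel X L A (line L b d)" and X: "b \<in> X" "d \<in> X"
    and p: "p \<in> A" "p \<in> line L b d"
  shows "A \<subseteq> line L b d"
proof -
  have "A \<subseteq> flat_hull X L (insert p (line L b d))" using sp p unfolding subparallel_def by blast
  moreover have "insert p (line L b d) = line L b d" using p by blast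
  ultimately show ?thesis using hull_of_flat[OF flat_line[OF L X]] by simp
qed

lemma not_subpar_point:
  assumes L: "liner X L" and X: "c \<in> X" "d \<in> X" "p \<in> X" and cd: "c \<noteq> d"
    and sp: "subparallel X L (line L c d) {p}"
  shows False
proof (cases "p \<in> line L c d")
  case True
  then have "line L c d \<subseteq> flat_hull X L (insert p {p})" using sp unfolding subparallel_def by blast
  then have "line L c d \<subseteq> flat_hull X L {p}" by simp
  also have "flat_hull X L {p} \<subseteq> {p}"
    using hull_pair_line[OF L X(3) X(3)] by (simp add: line_def)
  finally show False using line_ends[OF L X(1,2)] cd by blast
next
  case False
  have cl: "c \<in> line L c d" "d \<in> line L c d" using line_ends[OF L X(1,2)] by auto
  then have "line L c d \<subseteq> flat_hull X L {c, p}" using sp unfolding subparallel_def by auto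
  also have "\<dots> \<subseteq> line L c p" by (rule hull_pair_line[OF L X(1,3)])
  finally have dl: "d \<in> line L c p" using cl by blast
  have cp: "c \<noteq> p" using False cl by blast
  have "line L c d = line L c p"
    using line_eq[OF L X(1,3) cp line_ends(1)[OF L X(1,3)] dl cd] .
  then show False using False line_ends(2)[OF L X(1,3)] by simp
qed


theorem theorem6p8p8:
  fixes X :: "'a set" and L :: "'a set set"
  assumes "liner X L" and "ranked3 X L"
  shows "boolean_liner X L \<longleftrightarrow>
    (\<forall>a b c d. parallelogram X L a b c d \<longrightarrow> boolean_parallelogram X L a b c d)"
proof
  note L = assms(1) and R = assms(2)
  assume B: "boolean_liner X L"
  show "\<forall>a b c d. parallelogram X L a b c d \<longrightarrow> boolean_parallelogram X L a b c d"
  proof (intro allI impI)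
    fix a b c d assume PG: "parallelogram X L a b c d"
    then have X: "a \<in> X" "b \<in> X" "c \<in> X" "d \<in> X"
      and p1: "parallel X L (line L a b) (line L c d)" and n1: "line L c d \<noteq> line L a b"
      and p2: "parallel X L (line L b c) (line L a d)" and n2: "line L a d \<noteq> line L b c"
      unfolding parallelogram_def by auto
    have s1: "subparallel X L (line L a b) (line L c d)" "subparallel X L (line L c d) (line L a b)"
      using p1 unfolding parallel_def by auto
    have s2: "subparallel X L (line L b c) (line L a d)" "subparallel X L (line L a d) (line L b c)"
      using p2 unfolding parallel_def by auto
    have ab: "a \<noteq> b"
    proof
      assume e: "a = b"
      have "c = d"
      proof (rule ccontr)
        assume "c \<noteq> d"
        then show False using not_subpar_point[OF L X(3,4) X(1)] s1(2) e by (simp add: line_def)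
      qed
      then show False using n2 e by simp
    qed
    have cd: "c \<noteq> d"
    proof
      assume e: "c = d"
      show False using not_subpar_point[OF L X(1,2) X(3) ab] s1(1) e by (simp add: line_def)
    qed
    have bc: "b \<noteq> c"
    proof
      assume e: "b = c"
      have "a = d"
      proof (rule ccontr)
        assume "a \<noteq> d"
        then show False using not_subpar_point[OF L X(1,4) X(2)] s2(2) e by (simp add: line_def)
      qed
      then show False using n1 e line_sym[OF L X(3,4)] by simp
    qed
    have ad: "a \<noteq> d"
    proof
      assume e: "a = d"
      show False using not_subpar_point[OF L X(2,3) X(1) bc] s2(1) e by (simp add: line_def)
    qed
    have d1: "line L a b \<inter> line L c d = {}"
    proof (rule ccontr)
      assume "line L a b \<inter> line L c d \<noteq> {}"
      then obtain p where p: "p \<in> line L a b" "p \<in> line L c d" by blast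
      have "line L a b \<subseteq> line L c d" by (rule par_meet[OF L s1(1) X(3,4) p])
      moreover have "line L c d \<subseteq> line L a b" by (rule par_meet[OF L s1(2) X(1,2) p(2,1)])
      ultimately show False using n1 by blast
    qed
    have d2: "line L b c \<inter> line L a d = {}"
    proof (rule ccontr)
      assume "line L b c \<inter> line L a d \<noteq> {}"
      then obtain p where p: "p \<in> line L b c" "p \<in> line L a d" by blast
      have "line L b c \<subseteq> line L a d" by (rule par_meet[OF L s2(1) X(1,4) p])
      moreover have "line L a d \<subseteq> line L b c" by (rule par_meet[OF L s2(2) X(2,3) p(2,1)])
      ultimately show False using n2 by blast
    qed
    have d3: "line L a c \<inter> line L b d = {}" using B X d1 d2 unfolding boolean_liner_def by blast
    have e1: "a \<in> line L a b" "b \<in> line L a b" using line_ends[OF L X(1,2)] by auto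
    have e2: "c \<in> line L c d" "d \<in> line L c d" using line_ends[OF L X(3,4)] by auto
    have ac: "a \<noteq> c" using e1 e2 d1 by blast
    have bd: "b \<noteq> d" using e1 e2 d1 by blast
    have c_n: "c \<notin> line L a b" using e2 d1 by blast
    let ?P = "flat_hull X L {a, b, c}"
    have fP: "flat X L ?P" using hull_flat[OF L] X by simp
    have abcP: "a \<in> ?P" "b \<in> ?P" "c \<in> ?P" using hull_sub[of "{a,b,c}" X L] by auto
    have "line L b c \<subseteq> ?P" by (rule flat_line_sub[OF L fP abcP(2,3)])
    then have "insert a (line L b c) \<subseteq> ?P" using abcP by blast
    then have h: "flat_hull X L (insert a (line L b c)) \<subseteq> ?P" by (rule hull_least[OF fP])
    have "line L a d \<subseteq> flat_hull X L (insert a (line L b c))"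
      using s2(2) line_ends[OF L X(1,4)] unfolding subparallel_def by blast
    then have dP: "d \<in> ?P" using h line_ends[OF L X(1,4)] by blast
    have "subparallel X L (line L a c) (line L b d)"
      by (rule subpar[OF L R X(1,2,3) ab c_n X(1,3,2,4) bd d3 abcP(1,3,2) dP])
    moreover have "subparallel X L (line L b d) (line L a c)"
      by (rule subpar[OF L R X(1,2,3) ab c_n X(2,4,1,3) ac _ abcP(2) dP abcP(1,3)]) (use d3 in blast)
    ultimately show "boolean_parallelogram X L a b c d"
      using PG unfolding boolean_parallelogram_def parallel_def by simp
  qed
next
  note L = assms(1) and R = assms(2)
  assume H: "\<forall>a b c d. parallelogram X L a b c d \<longrightarrow> boolean_parallelogram X L a b c d"
  show "boolean_liner X L"
    unfolding boolean_liner_def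
  proof (intro ballI impI)
    fix a b c d assume X: "a \<in> X" "b \<in> X" "c \<in> X" "d \<in> X"
    assume "line L a b \<inter> line L c d = {} \<and> line L b c \<inter> line L a d = {}"
    then have d1: "line L a b \<inter> line L c d = {}" and d2: "line L b c \<inter> line L a d = {}" by auto
    have e1: "a \<in> line L a b" "b \<in> line L a b" using line_ends[OF L X(1,2)] by auto
    have e2: "c \<in> line L c d" "d \<in> line L c d" using line_ends[OF L X(3,4)] by auto
    have e3: "b \<in> line L b c" "c \<in> line L b c" using line_ends[OF L X(2,3)] by auto
    have e4: "a \<in> line L a d" "d \<in> line L a d" using line_ends[OF L X(1,4)] by auto
    have ab: "a \<noteq> b" using e3 e4 d2 by blast
    have cd: "c \<noteq> d" using e3 e4 d2 by blast
    have bd: "b \<noteq> d" using e1 e2 d1 by blast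
    have ac: "a \<noteq> c" using e1 e2 d1 by blast
    have ad: "a \<noteq> d" using e1 e2 d1 by blast
    have bc: "b \<noteq> c" using e1 e2 d1 by blast
    have c_n: "c \<notin> line L a b" using e2 d1 by blast
    have a_bd: False if "a \<in> line L b d"
    proof -
      have "line L a b = line L b d"
        using line_eq[OF L X(2,4) bd that line_ends(1)[OF L X(2,4)] ab] .
      then show False using line_ends(2)[OF L X(2,4)] e2 d1 by blast
    qed
    show "line L a c \<inter> line L b d = {}"
    proof (rule ccontr)
      assume "line L a c \<inter> line L b d \<noteq> {}"
      then obtain p where p: "p \<in> line L a c" "p \<in> line L b d" by blast
      have pX: "p \<in> X" using p line_sub[OF L X(1,3)] by blast
      have pb: "p \<noteq> b"
      proof
        assume "p = b"
        then have bl: "b \<in> line L a c" using p(1) by simp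
        have "line L a b = line L a c"
          using line_eq[OF L X(1,3) ac line_ends(1)[OF L X(1,3)] bl ab] .
        then show False using line_ends(2)[OF L X(1,3)] e2 d1 by blast
      qed
      let ?P = "flat_hull X L {a, b, c}"
      have fP: "flat X L ?P" using hull_flat[OF L] X by simp
      have abcP: "a \<in> ?P" "b \<in> ?P" "c \<in> ?P" using hull_sub[of "{a,b,c}" X L] by auto
      have "line L a c \<subseteq> ?P" by (rule flat_line_sub[OF L fP abcP(1,3)])
      then have pP: "p \<in> ?P" using p by blast
      have "line L b p = line L b d"
        using line_eq[OF L X(2,4) bd line_ends(1)[OF L X(2,4)] p(2) pb[symmetric]] .
      moreover have "line L b p \<subseteq> ?P" by (rule flat_line_sub[OF L fP abcP(2) pP])
      ultimately have dP: "d \<in> ?P" using line_ends(2)[OF L X(2,4)] by blast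
      have a_n: "a \<notin> line L b c" using e4 d2 by blast
      have PG: "parallelogram X L a b c d"
        unfolding parallelogram_def parallel_def
      proof (intro conjI)
        show "a \<in> X" "b \<in> X" "c \<in> X" "d \<in> X" by (fact X)+
        show "subparallel X L (line L a b) (line L c d)"
          by (rule subpar[OF L R X(1,2,3) ab c_n X(1,2,3,4) cd d1 abcP dP])
        show "subparallel X L (line L c d) (line L a b)"
          by (rule subpar[OF L R X(1,2,3) ab c_n X(3,4,1,2) ab _ abcP(3) dP abcP(1,2)]) (use d1 in blast)
        show "line L c d \<noteq> line L a b" using e2 c_n by blast
        show "subparallel X L (line L b c) (line L a d)"
          by (rule subpar[OF L R X(1,2,3) ab c_n X(2,3,1,4) ad d2 abcP(2,3,1) dP])
        show "subparallel X L (line L a d) (line L b c)"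
          by (rule subpar[OF L R X(1,2,3) ab c_n X(1,4,2,3) bc _ abcP(1) dP abcP(2,3)]) (use d2 in blast)
        show "line L a d \<noteq> line L b c" using e4 a_n by blast
      qed
      then have "parallel X L (line L a c) (line L b d)" using H unfolding boolean_parallelogram_def by blast
      then have "subparallel X L (line L a c) (line L b d)" unfolding parallel_def by simp
      then have "line L a c \<subseteq> line L b d" by (rule par_meet[OF L _ X(2,4) p])
      then show False using a_bd line_ends(1)[OF L X(1,3)] by blast
    qed
  qed
qed

end
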